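(* Let $n\ge2$ and, for $\mathbf w,\mathbf w'\in\mathcal{W}^n$ and $1\le j\le n-1$, let $\mathscr M_j(\mathbf w,\mathbf w')$ be the probability that a single Moran event transforms $\mathbf w$ into $\mathbf w'$ and that the dying leaf $u$ is a child of the internal node of rank $j$ in $\mathbf w$. Then $\mathscr M(\mathbf w,\mathbf w')=\sum_{j=1}^{n-1}\mathscr M_j(\mathbf w,\mathbf w')$, and for all $\mathbf w,\mathbf w'\in\mathcal W^n$ and $j$, \[ \sum_{\mathbf w\in\mathcal W^n}\mathscr M_j(\mathbf w,\mathbf w')=\frac{j}{\binom n2},\qquad \sum_{\mathbf w'\in\mathcal W^n}\mathscr M_j(\mathbf w,\mathbf w')=\frac{B_j(\mathbf w)}{n}, \] where $B_j(\mathbf w)$ is the number of leaves among the two children of the rank-$j$ internal node of $\mathbf w$.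
   Context: $\mathcal W^n$ is the set of ranked leaf-labelled rooted binary tree topologies with leaves $\{1,\dots,n\}$: binary trees with $n-1$ internal nodes totally ordered by rank $1,\dots,n-1$ (rank 1 is the root; each internal node has larger rank than its parent). A Moran event on $\mathbf w\in\mathcal W^n$: an ordered pair $(u,v)$ of distinct leaves is chosen uniformly at random among the $n(n-1)$ ordered pairs; leaf $u$ and its parent internal node are removed (the sibling of $u$ is reattached to the parent of the removed node, ranks of later nodes shifting down by one), and then a new internal node of rank $n-1$ is inserted on the edge above leaf $v$, with children $u$ and $v$. $\mathscr M(\mathbf w,\mathbf w')$ is the probability that a Moran event transforms $\mathbf w$ into $\mathbf w'$. *)

theory Defs
  imports Complex_Main
begin

text \<open>Nodes of a ranked tree: leaves labelled by naturals, internal nodes by their rank.\<close>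
datatype node = L nat | I nat

text \<open>A ranked tree topology is encoded by its parent map: p x is the rank of the parent
  of node x; the root (internal node of rank 1) and all non-nodes get the value 0.\<close>
type_synonym rtree = "node \<Rightarrow> nat"

definition nodes :: "nat \<Rightarrow> node set" where
  "nodes n = L ` {1..n} \<union> I ` {1..n-1}"

definition W :: "nat \<Rightarrow> rtree set" where
  "W n = {p. (\<forall>i\<in>{1..n}. 1 \<le> p (L i) \<and> p (L i) \<le> n - 1)
           \<and> (\<forall>k\<in>{2..n-1}. 1 \<le> p (I k) \<and> p (I k) < k)
           \<and> (\<forall>k\<in>{1..n-1}. card {x \<in> nodes n. p x = k} = 2)
           \<and> (\<forall>x. x \<notin> nodes n - {I 1} \<longrightarrow> p x = 0)}"

text \<open>Moran event with dying leaf u and reproducing leaf v on the tree p with n leaves.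
  a = parent of u (removed); its other child gets the parent of a; ranks above a shift
  down by one; finally a new node of rank n-1 is put on the edge above v with children u, v.\<close>
definition moran :: "nat \<Rightarrow> rtree \<Rightarrow> nat \<Rightarrow> nat \<Rightarrow> rtree" where
  "moran n p u v =
    (let a = p (L u);
         p2 = (\<lambda>x. if p x = a \<and> x \<noteq> L u then p (I a) else p x);
         sh = (\<lambda>r. if r > a then r - 1 else r);
         ush = (\<lambda>k. if k < a then k else k + 1);
         q = (\<lambda>x. case x of L i \<Rightarrow> sh (p2 (L i)) | I k \<Rightarrow> sh (p2 (I (ush k))))
     in (\<lambda>x. if x = L u \<or> x = L v then n - 1
            else if x = I (n - 1) then q (L v)
            else q x))"

definition moran_pairs :: "nat \<Rightarrow> (nat \<times> nat) set" where
  "moran_pairs n = {(u, v). u \<in> {1..n} \<and> v \<in> {1..n} \<and> u \<noteq> v}"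

definition Mor :: "nat \<Rightarrow> rtree \<Rightarrow> rtree \<Rightarrow> real" where
  "Mor n w w' = real (card {(u, v) \<in> moran_pairs n. moran n w u v = w'}) / real (n * (n - 1))"

definition Mor_j :: "nat \<Rightarrow> nat \<Rightarrow> rtree \<Rightarrow> rtree \<Rightarrow> real" where
  "Mor_j n j w w' = real (card {(u, v) \<in> moran_pairs n. moran n w u v = w' \<and> w (L u) = j})
                     / real (n * (n - 1))"

definition B :: "nat \<Rightarrow> nat \<Rightarrow> rtree \<Rightarrow> nat" where
  "B n j w = card {i \<in> {1..n}. w (L i) = j}"

end

theory Submission imports Defs "HOL-Library.FuncSet" begin

definition sh :: "nat \<Rightarrow> nat \<Rightarrow> nat" where "sh a r = (if r > a then r - 1 else r)"
definition ush :: "nat \<Rightarrow> nat \<Rightarrow> nat" where "ush a k = (if k < a then k else k + 1)"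
definition pp2 :: "rtree \<Rightarrow> nat \<Rightarrow> rtree" where
  "pp2 p u x = (if p x = p (L u) \<and> x \<noteq> L u then p (I (p (L u))) else p x)"
definition Q :: "rtree \<Rightarrow> nat \<Rightarrow> rtree" where
  "Q p u = (\<lambda>x. if x = L u then 0 else (case x of L i \<Rightarrow> sh (p (L u)) (pp2 p u (L i))
       | I k \<Rightarrow> sh (p (L u)) (pp2 p u (I (ush (p (L u)) k)))))"
definition topins :: "nat \<Rightarrow> rtree \<Rightarrow> nat \<Rightarrow> nat \<Rightarrow> rtree" where
  "topins n r u v = (\<lambda>x. if x = L u \<or> x = L v then n - 1 else if x = I (n - 1) then r (L v) else r x)"

lemma moran_topins: "u \<noteq> v \<Longrightarrow> moran n p u v = topins n (Q p u) u v"
  unfolding moran_def topins_def Q_def pp2_def sh_def ush_def Let_def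
  by (rule ext) (auto split: node.split)

definition tr :: "nat \<Rightarrow> node \<Rightarrow> node" where
  "tr a z = (case z of L i \<Rightarrow> L i | I m \<Rightarrow> I (ush a m))"
definition untr :: "nat \<Rightarrow> node \<Rightarrow> node" where
  "untr a z = (case z of L i \<Rightarrow> L i | I k \<Rightarrow> I (if k < a then k else k - 1))"
definition Xf :: "rtree \<Rightarrow> node \<Rightarrow> nat \<Rightarrow> nat \<Rightarrow> rtree" where
  "Xf r y a u = (\<lambda>z. if z = L u then a else if z = I a then r y
      else if z = tr a y then a else ush a (r (untr a z)))"
definition trp :: "node \<Rightarrow> nat \<Rightarrow> node \<Rightarrow> node" where
  "trp y a z = (if z = y then I a else tr a z)"
definition NN :: "nat \<Rightarrow> nat \<Rightarrow> node set" where
  "NN n u = L ` ({1..n} - {u}) \<union> I ` {1..n-2}"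

lemma mem_nodes[simp]: "L i \<in> nodes n \<longleftrightarrow> 1 \<le> i \<and> i \<le> n"
    "I k \<in> nodes n \<longleftrightarrow> 1 \<le> k \<and> k \<le> n - 1"
  by (auto simp: nodes_def)
lemma mem_NN[simp]: "L i \<in> NN n u \<longleftrightarrow> 1 \<le> i \<and> i \<le> n \<and> i \<noteq> u"
    "I k \<in> NN n u \<longleftrightarrow> 1 \<le> k \<and> k \<le> n - 2"
  by (auto simp: NN_def)

lemma sh_ush[simp]: "sh a (ush a m) = m"
  by (simp add: sh_def ush_def)
lemma ush_sh: "k \<noteq> a \<Longrightarrow> ush a (sh a k) = k"
  by (auto simp add: sh_def ush_def)
lemma ush_neq[simp]: "ush a m \<noteq> a"
  by (simp add: ush_def)
lemma ush_neq2[simp]: "a \<noteq> ush a m"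
  by (simp add: ush_def)
lemma ush_inj[simp]: "ush a m = ush a m' \<longleftrightarrow> m = m'"
  by (auto simp add: ush_def split: if_splits)
lemma ush_0[simp]: "0 < a \<Longrightarrow> ush a 0 = 0"
  by (simp add: ush_def)
lemma tr_L[simp]: "tr a (L i) = L i" and untr_L[simp]: "untr a (L i) = L i"
  by (simp_all add: tr_def untr_def)
lemma tr_I: "tr a (I m) = I (ush a m)"
  by (simp add: tr_def)
lemma tr_inj[simp]: "tr a z = tr a z' \<longleftrightarrow> z = z'"
  by (cases z; cases z') (auto simp: tr_def)
lemma tr_neq[simp]: "tr a z \<noteq> I a"
  by (cases z) (auto simp: tr_def)
lemma tr_neq2[simp]: "I a \<noteq> tr a z"
  using tr_neq by metis
lemma tr_eq_L[simp]: "tr a z = L i \<longleftrightarrow> z = L i"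
  by (cases z) (auto simp: tr_def)
lemma tr_untr: "z \<noteq> I a \<Longrightarrow> tr a (untr a z) = z"
  by (cases z) (auto simp: tr_def untr_def ush_def)
lemma untr_tr[simp]: "untr a (tr a z) = z"
  by (cases z) (auto simp: tr_def untr_def ush_def)

lemma Xf_Lu[simp]: "Xf r y a u (L u) = a"
  by (simp add: Xf_def)
lemma Xf_tr: "y \<noteq> L u \<Longrightarrow> Xf r y a u (tr a y) = a"
  by (auto simp add: Xf_def)
lemma Xf_trp: "r y < a \<Longrightarrow> y \<noteq> L u \<Longrightarrow> z \<noteq> L u \<Longrightarrow> Xf r y a u (trp y a z) = ush a (r z)"
  by (auto simp add: Xf_def trp_def ush_def)

lemma trp_bij:
  assumes "1 \<le> a" "a \<le> n - 1" "y \<in> NN n u" "u \<in> {1..n}"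
  shows "bij_betw (trp y a) (NN n u) (nodes n - {L u, tr a y})"
proof (rule bij_betw_imageI)
  show "inj_on (trp y a) (NN n u)"
    by (rule inj_onI) (auto simp: trp_def split: if_splits)
  show "trp y a ` NN n u = nodes n - {L u, tr a y}"
  proof
    show "trp y a ` NN n u \<subseteq> nodes n - {L u, tr a y}"
    proof
      fix w assume "w \<in> trp y a ` NN n u"
      then obtain z where z: "z \<in> NN n u" "w = trp y a z" by auto
      show "w \<in> nodes n - {L u, tr a y}"
      proof (cases "z = y")
        case True then show ?thesis using z assms by (auto simp: trp_def)
      next
        case False
        have "tr a z \<in> nodes n"
        proof (cases z)
          case (L i) then show ?thesis using z by auto
        next
          case (I m)
          then have "m \<in> {1..n-2}" using z by auto
          then have "ush a m \<in> {1..n-1}" using assms by (auto simp: ush_def)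
          then show ?thesis using I by (auto simp: tr_I)
        qed
        moreover have "z \<noteq> L u" using z by auto
        ultimately show ?thesis using z False by (auto simp: trp_def)
      qed
    qed
    show "nodes n - {L u, tr a y} \<subseteq> trp y a ` NN n u"
    proof
      fix z assume z: "z \<in> nodes n - {L u, tr a y}"
      show "z \<in> trp y a ` NN n u"
      proof (cases "z = I a")
        case True then show ?thesis using assms by (auto simp: trp_def)
      next
        case False
        have "untr a z \<in> NN n u" using z False assms
          by (cases z) (auto simp: untr_def)
        moreover have "untr a z \<noteq> y" using z False tr_untr by force
        ultimately show ?thesis using tr_untr[OF False]
          by (metis image_eqI trp_def)
      qed
    qed
  qed
qed

lemma card_corr:
  assumes "1 \<le> a" "a \<le> n - 1" "y \<in> NN n u" "u \<in> {1..n}" "r y < a"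
  shows "card {z \<in> nodes n. Xf r y a u z = ush a k} = card {z \<in> NN n u. r z = k}"
proof -
  have bij: "bij_betw (trp y a) (NN n u) (nodes n - {L u, tr a y})"
    using trp_bij[OF assms(1-4)] .
  have yu: "y \<noteq> L u" using assms(3) by auto
  have NNu: "z \<in> NN n u \<Longrightarrow> z \<noteq> L u" for z by auto
  have "{z \<in> nodes n. Xf r y a u z = ush a k} = trp y a ` {z \<in> NN n u. r z = k}"
  proof
    show "{z \<in> nodes n. Xf r y a u z = ush a k} \<subseteq> trp y a ` {z \<in> NN n u. r z = k}"
    proof
      fix z assume z: "z \<in> {z \<in> nodes n. Xf r y a u z = ush a k}"
      then have "z \<noteq> L u" "z \<noteq> tr a y" using Xf_tr[OF yu] by (auto simp del: ush_inj)
      then have "z \<in> trp y a ` NN n u" using z bij by (auto simp: bij_betw_def)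
      then obtain z' where z': "z' \<in> NN n u" "z = trp y a z'" by auto
      have "r z' = k" using z z' Xf_trp[of r y a u z', OF assms(5) yu NNu[OF z'(1)]] by auto
      then show "z \<in> trp y a ` {z \<in> NN n u. r z = k}" using z' by auto
    qed
    show "trp y a ` {z \<in> NN n u. r z = k} \<subseteq> {z \<in> nodes n. Xf r y a u z = ush a k}"
      using bij Xf_trp[of r y a u, OF assms(5) yu NNu] by (auto simp: bij_betw_def)
  qed
  moreover have "inj_on (trp y a) {z \<in> NN n u. r z = k}"
    using bij by (auto simp: bij_betw_def intro: inj_on_subset)
  ultimately show ?thesis by (simp add: card_image)
qed

lemma Q_alt: "z \<noteq> L u \<Longrightarrow> Q p u z = sh (p (L u)) (pp2 p u (tr (p (L u)) z))"
  by (cases z) (auto simp: Q_def tr_def)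

lemma Q_Xf:
  assumes "r y < a" "y \<noteq> L u" "r (L u) = 0"
  shows "Q (Xf r y a u) u = r"
proof
  fix z
  show "Q (Xf r y a u) u z = r z"
  proof (cases "z = L u")
    case True then show ?thesis using assms by (simp add: Q_def)
  next
    case False
    have "Xf r y a u (I a) = r y" by (simp add: Xf_def)
    have vals: "Xf r y a u w = a \<longleftrightarrow> w = L u \<or> w = tr a y" for w
      using assms Xf_tr[OF assms(2)] by (auto simp: Xf_def)
    show ?thesis
    proof (cases "z = y")
      case True
      then show ?thesis using False assms vals
        by (simp add: Q_alt pp2_def Xf_def sh_def)
    next
      case False2: False
      have "tr a z \<noteq> L u" using False by (metis tr_eq_L)
      then show ?thesis using False False2 assms vals
        by (simp add: Q_alt pp2_def Xf_def)
    qed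
  qed
qed

definition Rd :: "nat \<Rightarrow> nat \<Rightarrow> rtree \<Rightarrow> bool" where
  "Rd n u r \<longleftrightarrow> (\<forall>i\<in>{1..n}-{u}. 1 \<le> r (L i) \<and> r (L i) \<le> n - 2)
     \<and> (\<forall>k\<in>{2..n-2}. 1 \<le> r (I k) \<and> r (I k) < k)
     \<and> (\<forall>k\<in>{1..n-2}. card {z \<in> NN n u. r z = k} = 2)
     \<and> (\<forall>z. z \<notin> NN n u - {I 1} \<longrightarrow> r z = 0)"

lemma Rd_1: "Rd n u r \<Longrightarrow> 1 \<le> i \<Longrightarrow> i \<le> n \<Longrightarrow> i \<noteq> u \<Longrightarrow> 1 \<le> r (L i) \<and> r (L i) \<le> n - 2"
  unfolding Rd_def by simp
lemma Rd_2: "Rd n u r \<Longrightarrow> 2 \<le> k \<Longrightarrow> k \<le> n - 2 \<Longrightarrow> 1 \<le> r (I k) \<and> r (I k) < k"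
  unfolding Rd_def by simp
lemma Rd_3: "Rd n u r \<Longrightarrow> 1 \<le> k \<Longrightarrow> k \<le> n - 2 \<Longrightarrow> card {z \<in> NN n u. r z = k} = 2"
  unfolding Rd_def by simp
lemma Rd_4: "Rd n u r \<Longrightarrow> z \<notin> NN n u - {I 1} \<Longrightarrow> r z = 0"
  unfolding Rd_def by simp
lemma Rd_zero:
  assumes "Rd n u r" "z \<in> NN n u" "r z = 0"
  shows "z = I 1"
proof (cases z)
  case (L i)
  then show ?thesis using assms Rd_1[OF assms(1), of i] by auto
next
  case (I k)
  show ?thesis
  proof (rule ccontr)
    assume "z \<noteq> I 1"
    then have "k \<in> {2..n-2}" using I assms by auto
    then show False using I assms Rd_2[OF assms(1), of k] by auto
  qed
qed

lemma Xf_W: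
  assumes n3: "n \<ge> 3" and R: "Rd n u r" and u: "u \<in> {1..n}" and a: "1 \<le> a" "a \<le> n - 1"
    and y: "y \<in> NN n u" "r y < a" "\<forall>m. y = I m \<longrightarrow> a \<le> m"
  shows "Xf r y a u \<in> W n"
proof -
  let ?X = "Xf r y a u"
  have yu: "y \<noteq> L u" using y by auto
  have R1: "\<And>i. i \<in> {1..n} \<Longrightarrow> i \<noteq> u \<Longrightarrow> 1 \<le> r (L i) \<and> r (L i) \<le> n - 2"
    and R2: "\<And>k. k \<in> {2..n-2} \<Longrightarrow> 1 \<le> r (I k) \<and> r (I k) < k"
    and R3: "\<And>k. k \<in> {1..n-2} \<Longrightarrow> card {z \<in> NN n u. r z = k} = 2"
    and R4: "\<And>z. z \<notin> NN n u - {I 1} \<Longrightarrow> r z = 0"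
    using Rd_1[OF R] Rd_2[OF R] Rd_3[OF R] Rd_4[OF R] by auto
  have y1: "r y \<ge> 1" if "y \<noteq> I 1"
    using Rd_zero[OF R y(1)] that by (cases "r y") auto
  have tyy: "tr a y \<in> nodes n" "tr a y \<noteq> L u" "tr a y \<noteq> I 1"
  proof -
    show "tr a y \<noteq> L u" using yu by (metis tr_eq_L)
    show "tr a y \<in> nodes n" "tr a y \<noteq> I 1"
    proof (atomize (full), cases y)
      case (L i) then show "tr a y \<in> nodes n \<and> tr a y \<noteq> I 1" using y by auto
    next
      case (I m) then show "tr a y \<in> nodes n \<and> tr a y \<noteq> I 1" using y a
        by (auto simp: tr_I ush_def)
    qed
  qed
  have W1: "\<forall>i\<in>{1..n}. 1 \<le> ?X (L i) \<and> ?X (L i) \<le> n - 1"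
  proof
    fix i assume i: "i \<in> {1..n}"
    show "1 \<le> ?X (L i) \<and> ?X (L i) \<le> n - 1"
    proof (cases "i = u \<or> L i = tr a y")
      case True then show ?thesis using a Xf_tr[OF yu, of r] by auto
    next
      case False
      then have "?X (L i) = ush a (r (L i))" by (auto simp: Xf_def)
      then show ?thesis using R1[OF i] False a by (auto simp: ush_def)
    qed
  qed
  have W2: "\<forall>k\<in>{2..n-1}. 1 \<le> ?X (I k) \<and> ?X (I k) < k"
  proof
    fix k assume k: "k \<in> {2..n-1}"
    show "1 \<le> ?X (I k) \<and> ?X (I k) < k"
    proof (cases "k = a")
      case True
      then have "y \<noteq> I 1" using y(3) k by auto
      then show ?thesis using True y1 y by (auto simp: Xf_def)
    next
      case ka: False
      show ?thesis
      proof (cases "I k = tr a y")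
        case True
        then obtain m where m: "y = I m" "k = ush a m"
          by (cases y) (auto simp: tr_I)
        then show ?thesis using True Xf_tr[OF yu, of r] y(3) a by (auto simp: ush_def)
      next
        case False
        then have X: "?X (I k) = ush a (r (untr a (I k)))" using ka by (auto simp: Xf_def)
        show ?thesis
        proof (cases "k < a")
          case True
          then have "k \<in> {2..n-2}" using k a by auto
          then show ?thesis using X R2[of k] True by (auto simp: untr_def ush_def)
        next
          case False
          then have ka': "k > a" using ka by auto
          show ?thesis
          proof (cases "k = 2")
            case True
            then have "a = 1" using ka' a by auto
            then have "y = I 1" using Rd_zero[OF R y(1)] y(2) by auto
            then have "tr a y = I k" using \<open>a = 1\<close> True by (auto simp: tr_I ush_def)
            then show ?thesis using \<open>I k \<noteq> tr a y\<close> by simp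
          next
            case False
            then have "k - 1 \<in> {2..n-2}" using k by auto
            then show ?thesis using X R2[of "k - 1"] ka' a by (auto simp: untr_def ush_def)
          qed
        qed
      qed
    qed
  qed
  have W3: "\<forall>k\<in>{1..n-1}. card {x \<in> nodes n. ?X x = k} = 2"
  proof
    fix k assume k: "k \<in> {1..n-1}"
    show "card {x \<in> nodes n. ?X x = k} = 2"
    proof (cases "k = a")
      case True
      have "{x \<in> nodes n. ?X x = k} = {L u, tr a y}"
        using True tyy Xf_tr[OF yu, of r] u y(2) by (auto simp: Xf_def)
      moreover have "L u \<noteq> tr a y" using yu by (metis tr_eq_L)
      ultimately show ?thesis by simp
    next
      case False
      have "sh a k \<in> {1..n-2}" using False k a by (auto simp: sh_def)
      then have c: "card {z \<in> NN n u. r z = sh a k} = 2" using R3 by blast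
      have "card {z \<in> nodes n. Xf r y a u z = ush a (sh a k)} = 2"
        using card_corr[of a n y u r "sh a k", OF a y(1) u y(2)] c by linarith
      then show ?thesis by (simp only: ush_sh[OF False])
    qed
  qed
  have W4: "\<forall>x. x \<notin> nodes n - {I 1} \<longrightarrow> ?X x = 0"
  proof (intro allI impI)
    fix z assume z: "z \<notin> nodes n - {I 1}"
    have zu: "z \<noteq> L u" using z u by auto
    have zt: "z \<noteq> tr a y" using z tyy by auto
    show "?X z = 0"
    proof (cases "z = I a")
      case True
      then have "a = 1" using z a by auto
      then show ?thesis using True y(2) zu by (simp add: Xf_def)
    next
      case False
      then have X: "?X z = ush a (r (untr a z))" using zu zt by (auto simp: Xf_def)
      have "untr a z \<notin> NN n u - {I 1}"
      proof (cases z)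
        case (L i) then show ?thesis using z by auto
      next
        case (I k)
        then show ?thesis using z False a by (auto simp: untr_def)
      qed
      then show ?thesis using X R4 a by simp
    qed
  qed
  show ?thesis unfolding W_def mem_Collect_eq by (intro conjI W1 W2 W3 W4)
qed

lemma W_1: "x \<in> W n \<Longrightarrow> 1 \<le> i \<Longrightarrow> i \<le> n \<Longrightarrow> 1 \<le> x (L i) \<and> x (L i) \<le> n - 1"
  unfolding W_def by simp
lemma W_2: "x \<in> W n \<Longrightarrow> 2 \<le> k \<Longrightarrow> k \<le> n - 1 \<Longrightarrow> 1 \<le> x (I k) \<and> x (I k) < k"
  unfolding W_def by simp
lemma W_3: "x \<in> W n \<Longrightarrow> 1 \<le> k \<Longrightarrow> k \<le> n - 1 \<Longrightarrow> card {z \<in> nodes n. x z = k} = 2"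
  unfolding W_def by simp
lemma W_4: "x \<in> W n \<Longrightarrow> z \<notin> nodes n - {I 1} \<Longrightarrow> x z = 0"
  unfolding W_def by simp

lemma finite_nodes[simp]: "finite (nodes n)"
  by (simp add: nodes_def)

lemma W_children:
  assumes "x \<in> W n" "k \<ge> 1" "z1 \<in> nodes n" "z2 \<in> nodes n" "z1 \<noteq> z2" "x z1 = k" "x z2 = k"
  shows "x z = k \<longleftrightarrow> z = z1 \<or> z = z2"
proof
  assume xz: "x z = k"
  have "z \<in> nodes n" using W_4[OF assms(1), of z] xz assms(2) by auto
  have kn: "k \<le> n - 1"
  proof (cases z1)
    case (L i) then show ?thesis using assms(3,6) W_1[OF assms(1), of i] by auto
  next
    case (I m)
    show ?thesis
    proof (cases "m = 1")
      case True then show ?thesis using I assms(2,6) W_4[OF assms(1), of z1] by auto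
    next
      case False then show ?thesis using I assms(3,6) W_2[OF assms(1), of m] by auto
    qed
  qed
  show "z = z1 \<or> z = z2"
  proof (rule ccontr)
    assume nz: "\<not> (z = z1 \<or> z = z2)"
    have "{z1, z2, z} \<subseteq> {z \<in> nodes n. x z = k}" using assms xz \<open>z \<in> nodes n\<close> by auto
    then have "card {z1, z2, z} \<le> card {z \<in> nodes n. x z = k}"
      by (intro card_mono) auto
    also have "\<dots> = 2" using W_3[OF assms(1) assms(2) kn] .
    finally show False using nz assms(5) by auto
  qed
next
  show "z = z1 \<or> z = z2 \<Longrightarrow> x z = k" using assms by auto
qed

lemma Q_W:
  assumes n3: "n \<ge> 3" and x: "x \<in> W n" and u: "u \<in> {1..n}" and s: "s \<in> nodes n" "s \<noteq> L u"
    "x s = x (L u)"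
  defines "a \<equiv> x (L u)"
  shows "Rd n u (Q x u) \<and> untr a s \<in> NN n u \<and> Q x u (untr a s) < a
     \<and> (\<forall>m. untr a s = I m \<longrightarrow> a \<le> m) \<and> x = Xf (Q x u) (untr a s) a u \<and> 1 \<le> a \<and> a \<le> n - 1"
proof -
  let ?r = "Q x u" let ?y = "untr a s"
  have a: "1 \<le> a" "a \<le> n - 1" using W_1[OF x, of u] u by (auto simp: a_def)
  have vals: "x z = a \<longleftrightarrow> z = L u \<or> z = s" for z
    using W_children[OF x a(1) _ s(1) _ _ s(3)[folded a_def], of "L u" z] u s(2) a_def by auto
  have xIa: "x (I a) < a"
  proof (cases "a = 1")
    case True then show ?thesis using W_4[OF x, of "I 1"] by auto
  next
    case False then show ?thesis using W_2[OF x, of a] a by auto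
  qed
  have xI2: "x (I 2) = 1"
  proof -
    have "2 \<le> n - 1" using n3 by simp
    then have "1 \<le> x (I 2) \<and> x (I 2) < 2" using W_2[OF x, of 2] by simp
    then show ?thesis by simp
  qed
  have "x s = a" using s(3) a_def by simp
  then have sIa: "s \<noteq> I a" using xIa by auto
  have str: "s = tr a ?y" using tr_untr[OF sIa] by simp
  have pp: "pp2 x u w = (if w = s then x (I a) else x w)" for w
  proof -
    have "pp2 x u w = (if x w = a \<and> w \<noteq> L u then x (I a) else x w)" by (simp add: pp2_def a_def)
    then show ?thesis using vals[of w] s(2) by auto
  qed
  have rz: "?r z = sh a (if tr a z = s then x (I a) else x (tr a z))" if "z \<noteq> L u" for z
    using Q_alt[OF that, of x] pp by (simp add: a_def)
  have yu: "?y \<noteq> L u" using s(2) str by (metis tr_L)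
  have ry: "?r ?y = x (I a)" using rz[OF yu] str xIa by (simp add: sh_def)
  have s_I: "k > a \<and> k \<le> n - 1" if "s = I k" for k
  proof -
    have "k \<noteq> 1" using that s(3) W_4[OF x, of "I 1"] a by (auto simp: a_def)
    then have "k \<ge> 2" "k \<le> n - 1" using that s(1) by auto
    then show ?thesis using W_2[OF x, of k] that s(3) by (auto simp: a_def)
  qed
  have yNN: "?y \<in> NN n u"
  proof (cases s)
    case (L i) then show ?thesis using s by auto
  next
    case (I k) then show ?thesis using s_I[OF I] a by (auto simp: untr_def)
  qed
  have lin: "\<forall>m. ?y = I m \<longrightarrow> a \<le> m"
  proof (cases s)
    case (L i) then show ?thesis by auto
  next
    case (I k) then show ?thesis using s_I[OF I] by (auto simp: untr_def)
  qed
  have xX: "x = Xf ?r ?y a u"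
  proof
    fix z
    show "x z = Xf ?r ?y a u z"
    proof (cases "z = L u \<or> z = I a \<or> z = tr a ?y")
      case True then show ?thesis using ry str s(3) by (auto simp: Xf_def a_def)
    next
      case False
      then have zs: "z \<noteq> s" "z \<noteq> I a" "z \<noteq> L u" using str by auto
      have "untr a z \<noteq> L u" using zs(3) by (cases z) (auto simp: untr_def)
      then have "?r (untr a z) = sh a (x z)" using rz tr_untr[OF zs(2)] zs(1) by simp
      moreover have "x z \<noteq> a" using vals zs by auto
      ultimately show ?thesis using False by (simp add: Xf_def ush_sh)
    qed
  qed
  have a1_leaf: False if "a = 1" "\<exists>i. s = L i"
  proof -
    have "x (I 2) = 1" using xI2 .
    then show False using vals[of "I 2"] that n3 by auto
  qed
  have R1: "\<forall>i\<in>{1..n}-{u}. 1 \<le> ?r (L i) \<and> ?r (L i) \<le> n - 2"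
  proof
    fix i assume i: "i \<in> {1..n}-{u}"
    show "1 \<le> ?r (L i) \<and> ?r (L i) \<le> n - 2"
    proof (cases "L i = s")
      case True
      then have "a \<noteq> 1" using a1_leaf by metis
      then have "x (I a) \<ge> 1" using W_2[OF x, of a] a by auto
      then show ?thesis using True rz[of "L i"] i xIa a by (auto simp: sh_def)
    next
      case False
      have "x (L i) \<noteq> a" using vals False i by auto
      then show ?thesis using False rz[of "L i"] i W_1[OF x, of i] a by (auto simp: sh_def)
    qed
  qed
  have R2: "\<forall>k\<in>{2..n-2}. 1 \<le> ?r (I k) \<and> ?r (I k) < k"
  proof
    fix k assume k: "k \<in> {2..n-2}"
    define K where "K = ush a k"
    have K: "K \<in> {2..n-1}" using k a by (auto simp: K_def ush_def)
    have rk: "?r (I k) = sh a (if I K = s then x (I a) else x (I K))"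
      using rz[of "I k"] by (simp add: tr_I K_def)
    show "1 \<le> ?r (I k) \<and> ?r (I k) < k"
    proof (cases "I K = s")
      case True
      have "K > a" using s_I[OF True[symmetric]] by simp
      then have ka: "k \<ge> a" by (auto simp: K_def ush_def split: if_splits)
      have "a \<noteq> 1"
      proof
        assume "a = 1"
        have "x (I 2) = 1" using xI2 .
        then have "I 2 = s" using vals[of "I 2"] \<open>a = 1\<close> by auto
        then show False using True k \<open>a = 1\<close> by (auto simp: K_def ush_def)
      qed
      then have "x (I a) \<ge> 1" using W_2[OF x, of a] a by auto
      then show ?thesis using True rk xIa ka by (auto simp: sh_def)
    next
      case False
      have "x (I K) \<noteq> a" using vals False by auto
      then show ?thesis using False rk W_2[OF x, of K] K a k
        by (auto simp: sh_def K_def ush_def split: if_splits)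
    qed
  qed
  have R3: "\<forall>k\<in>{1..n-2}. card {z \<in> NN n u. ?r z = k} = 2"
  proof
    fix k assume k: "k \<in> {1..n-2}"
    have "card {z \<in> NN n u. ?r z = k} = card {z \<in> nodes n. x z = ush a k}"
      using card_corr[of a n ?y u ?r k, OF a yNN u] ry xIa xX by simp
    also have "\<dots> = 2" using W_3[OF x, of "ush a k"] k a by (auto simp: ush_def)
    finally show "card {z \<in> NN n u. ?r z = k} = 2" .
  qed
  have R4: "\<forall>z. z \<notin> NN n u - {I 1} \<longrightarrow> ?r z = 0"
  proof (intro allI impI)
    fix z assume z: "z \<notin> NN n u - {I 1}"
    show "?r z = 0"
    proof (cases "z = L u")
      case True then show ?thesis by (simp add: Q_def)
    next
      case zu: False
      show ?thesis
      proof (cases "tr a z = s")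
        case True
        then have "z = ?y" using str by (metis tr_inj)
        then have "z = I 1" using z yNN by auto
        then have "a = 1" using lin \<open>z = ?y\<close> a by auto
        then show ?thesis using True rz[OF zu] W_4[OF x, of "I 1"] by (simp add: sh_def)
      next
        case False
        have "tr a z \<notin> nodes n - {I 1}"
        proof (cases z)
          case (L i) then show ?thesis using z zu by auto
        next
          case (I k)
          show ?thesis
          proof (cases "k = 1 \<and> a = 1")
            case True
            have "x (I 2) = 1" using xI2 .
            then have "I 2 = s" using vals[of "I 2"] True by auto
            then show ?thesis using False I True by (simp add: tr_I ush_def numeral_2_eq_2)
          next
            case False
            then show ?thesis using z I a by (auto simp: tr_I ush_def)
          qed
        qed
        then show ?thesis using False rz[OF zu] W_4[OF x] by (simp add: sh_def)
      qed
    qed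
  qed
  have "Rd n u ?r" unfolding Rd_def using R1 R2 R3 R4 by (intro conjI)
  then show ?thesis using yNN ry xIa lin xX a by simp
qed

lemma finite_NN[simp]: "finite (NN n u)"
  by (simp add: NN_def)

lemma Xf_top:
  assumes "Rd n u r" "u \<noteq> v" "v \<in> {1..n}" "n \<ge> 3"
  shows "Xf r (L v) (n - 1) u = topins n r u v"
proof
  fix z
  show "Xf r (L v) (n - 1) u z = topins n r u v z"
  proof (cases "z = L u \<or> z = L v \<or> z = I (n - 1)")
    case True then show ?thesis using assms by (auto simp: Xf_def topins_def)
  next
    case nb: False
    then have X: "Xf r (L v) (n - 1) u z = ush (n - 1) (r (untr (n - 1) z))"
      by (auto simp: Xf_def)
    show ?thesis
    proof (cases z)
      case (L i)
      have "r (L i) \<le> n - 2"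
      proof (cases "L i \<in> NN n u - {I 1}")
        case True then show ?thesis using Rd_1[OF assms(1), of i] by auto
      next
        case False then show ?thesis using Rd_4[OF assms(1) False] by simp
      qed
      then show ?thesis using X L nb assms(4) by (auto simp: topins_def ush_def)
    next
      case (I k)
      show ?thesis
      proof (cases "k < n - 1")
        case True
        have "r (I k) < n - 1"
        proof (cases "k \<ge> 2")
          case True2: True
          have "k \<le> n - 2" using True by linarith
          then show ?thesis using Rd_2[OF assms(1), of k] True True2 by auto
        next
          case False
          then have "I k \<notin> NN n u - {I 1}" by auto
          then show ?thesis using Rd_4[OF assms(1)] assms(4) by simp
        qed
        then show ?thesis using X I True nb by (auto simp: topins_def ush_def untr_def)
      next
        case False
        then have "k > n - 1" using I nb by auto
        then have "I (k - 1) \<notin> NN n u - {I 1}" "I k \<notin> NN n u - {I 1}" using assms(4) by auto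
        then have "r (I (k - 1)) = 0" "r (I k) = 0" using Rd_4[OF assms(1)] by auto
        then show ?thesis using X I False \<open>k > n - 1\<close> assms(4)
          by (auto simp: topins_def ush_def untr_def)
      qed
    qed
  qed
qed

lemma topins_inj:
  assumes "Rd n u r1" "Rd n u r2" "topins n r1 u v = topins n r2 u v" "u \<noteq> v" "n \<ge> 3"
  shows "r1 = r2"
proof
  fix z
  have z0: "r1 z = 0 \<and> r2 z = 0" if "z \<notin> NN n u - {I 1}" for z
    using Rd_4[OF assms(1) that] Rd_4[OF assms(2) that] by simp
  show "r1 z = r2 z"
  proof (cases "z = L u \<or> z = I (n - 1)")
    case True
    have "L u \<notin> NN n u - {I 1}" "I (n - 1) \<notin> NN n u - {I 1}" using assms(5) by auto
    then show ?thesis using z0 True by auto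
  next
    case False
    show ?thesis
    proof (cases "z = L v")
      case True
      then show ?thesis using fun_cong[OF assms(3), of "I (n - 1)"] assms(4)
        by (simp add: topins_def)
    next
      case False2: False
      then show ?thesis using fun_cong[OF assms(3), of z] False by (simp add: topins_def)
    qed
  qed
qed

lemma sibling_ex:
  assumes "x \<in> W n" "u \<in> {1..n}"
  shows "\<exists>s\<in>nodes n. s \<noteq> L u \<and> x s = x (L u)"
proof -
  let ?S = "{z \<in> nodes n. x z = x (L u)}"
  have "card ?S = 2" using W_3[OF assms(1)] W_1[OF assms(1), of u] assms(2) by auto
  moreover have "L u \<in> ?S" using assms(2) by auto
  ultimately have "card (?S - {L u}) = 1" by simp
  then obtain s where "s \<in> ?S - {L u}" by (metis card_1_singletonE insertI1)
  then show ?thesis by auto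
qed

lemma moran_W3:
  assumes "n \<ge> 3" "x \<in> W n" "u \<in> {1..n}" "v \<in> {1..n}" "u \<noteq> v"
  shows "moran n x u v \<in> W n"
proof -
  obtain s where s: "s \<in> nodes n" "s \<noteq> L u" "x s = x (L u)" using sibling_ex[OF assms(2,3)] by blast
  have R: "Rd n u (Q x u)" using Q_W[OF assms(1,2,3) s] by simp
  have "moran n x u v = Xf (Q x u) (L v) (n - 1) u"
    using moran_topins[OF assms(5)] Xf_top[OF R assms(5,4,1)] by simp
  moreover have "Xf (Q x u) (L v) (n - 1) u \<in> W n"
  proof (rule Xf_W[OF assms(1) R assms(3)])
    show "1 \<le> n - 1" "n - 1 \<le> n - 1" using assms(1) by auto
    show "L v \<in> NN n u" using assms by auto
    show "Q x u (L v) < n - 1" using Rd_1[OF R, of v] assms by auto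
    show "\<forall>m. L v = I m \<longrightarrow> n - 1 \<le> m" by simp
  qed
  ultimately show ?thesis by simp
qed

lemma card_Z:
  assumes R: "Rd n u r" and n3: "n \<ge> 3"
  shows "1 \<le> j \<Longrightarrow> j \<le> n - 1 \<Longrightarrow> card {y \<in> NN n u. r y < j} = 2 * j - 1"
proof (induction j)
  case 0 then show ?case by simp
next
  case (Suc j)
  show ?case
  proof (cases "j = 0")
    case True
    have "{y \<in> NN n u. r y < Suc j} = {I 1}"
    proof
      show "{y \<in> NN n u. r y < Suc j} \<subseteq> {I 1}" using Rd_zero[OF R] True by auto
      show "{I 1} \<subseteq> {y \<in> NN n u. r y < Suc j}" using Rd_4[OF R, of "I 1"] n3 by auto
    qed
    then show ?thesis using True by simp
  next
    case False
    have "{y \<in> NN n u. r y < Suc j} = {y \<in> NN n u. r y < j} \<union> {y \<in> NN n u. r y = j}" by auto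
    moreover have "card {y \<in> NN n u. r y = j} = 2" using Rd_3[OF R, of j] False Suc.prems by auto
    moreover have "card {y \<in> NN n u. r y < j} = 2 * j - 1" using Suc False by auto
    moreover have "card ({y \<in> NN n u. r y < j} \<union> {y \<in> NN n u. r y = j}) =
        card {y \<in> NN n u. r y < j} + card {y \<in> NN n u. r y = j}"
      by (rule card_Un_disjoint) auto
    ultimately have "card {y \<in> NN n u. r y < Suc j} = 2 * j - 1 + 2" by simp
    then show ?thesis using False by simp
  qed
qed

lemma card_Y:
  assumes R: "Rd n u r" and n3: "n \<ge> 3" and j: "1 \<le> j" "j \<le> n - 1"
  shows "card {y \<in> NN n u. r y < j \<and> (\<forall>m. y = I m \<longrightarrow> j \<le> m)} = j"
proof -
  have eq: "{y \<in> NN n u. r y < j \<and> (\<forall>m. y = I m \<longrightarrow> j \<le> m)} = {y \<in> NN n u. r y < j} - I ` {1..<j}"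
    by (auto simp: not_le)
  have sub: "I ` {1..<j} \<subseteq> {y \<in> NN n u. r y < j}"
  proof
    fix z assume "z \<in> I ` {1..<j}"
    then obtain m where m: "z = I m" "1 \<le> m" "m < j" by auto
    have "r (I m) < j"
    proof (cases "m = 1")
      case True then show ?thesis using Rd_4[OF R, of "I 1"] j by auto
    next
      case False
      have "m \<le> n - 2" "2 \<le> m" using m j False by auto
      then show ?thesis using Rd_2[OF R, of m] m by auto
    qed
    then show "z \<in> {y \<in> NN n u. r y < j}" using m j by auto
  qed
  have "card (I ` {1..<j}) = j - 1" by (simp add: card_image inj_on_def)
  then show ?thesis using eq sub card_Z[OF R n3 j] by (simp add: card_Diff_subset)
qed

lemma Xf_vals:
  assumes "r y < a" "y \<noteq> L u"
  shows "Xf r y a u z = a \<longleftrightarrow> z = L u \<or> z = tr a y"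
  using assms Xf_tr[OF assms(2)] by (auto simp: Xf_def)

lemma count_j3:
  assumes n3: "n \<ge> 3" and w': "w' \<in> W n" and u: "u \<in> {1..n}" and v: "v \<in> {1..n}" and uv: "u \<noteq> v"
    and cu: "w' (L u) = n - 1" and cv: "w' (L v) = n - 1" and j: "1 \<le> j" "j \<le> n - 1"
  shows "card {x \<in> W n. moran n x u v = w' \<and> x (L u) = j} = j"
proof -
  define r0 where "r0 = Q w' u"
  have QW: "Rd n u r0 \<and> w' = Xf r0 (L v) (n - 1) u"
    using Q_W[OF n3 w' u, of "L v"] v uv cu cv by (simp add: r0_def)
  then have R0: "Rd n u r0" by simp
  have w'top: "w' = topins n r0 u v" using QW Xf_top[OF R0 uv v n3] by simp
  have r0u: "r0 (L u) = 0" by (simp add: r0_def Q_def)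
  define Y where "Y = {y \<in> NN n u. r0 y < j \<and> (\<forall>m. y = I m \<longrightarrow> j \<le> m)}"
  have "{x \<in> W n. moran n x u v = w' \<and> x (L u) = j} = (\<lambda>y. Xf r0 y j u) ` Y"
  proof
    show "{x \<in> W n. moran n x u v = w' \<and> x (L u) = j} \<subseteq> (\<lambda>y. Xf r0 y j u) ` Y"
    proof
      fix x assume x: "x \<in> {x \<in> W n. moran n x u v = w' \<and> x (L u) = j}"
      then have xW: "x \<in> W n" by simp
      obtain s where s: "s \<in> nodes n" "s \<noteq> L u" "x s = x (L u)" using sibling_ex[OF xW u] by blast
      have QQ: "Rd n u (Q x u) \<and> untr j s \<in> NN n u \<and> Q x u (untr j s) < j
         \<and> (\<forall>m. untr j s = I m \<longrightarrow> j \<le> m) \<and> x = Xf (Q x u) (untr j s) j u"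
        using Q_W[OF n3 xW u s] x by simp
      have "topins n (Q x u) u v = topins n r0 u v"
        using moran_topins[OF uv, of n x] x w'top by simp
      then have "Q x u = r0" using topins_inj[OF _ R0 _ uv n3] QQ by blast
      then show "x \<in> (\<lambda>y. Xf r0 y j u) ` Y" using QQ unfolding Y_def by auto
    qed
    show "(\<lambda>y. Xf r0 y j u) ` Y \<subseteq> {x \<in> W n. moran n x u v = w' \<and> x (L u) = j}"
    proof
      fix x assume "x \<in> (\<lambda>y. Xf r0 y j u) ` Y"
      then obtain y where y: "y \<in> NN n u" "r0 y < j" "\<forall>m. y = I m \<longrightarrow> j \<le> m" "x = Xf r0 y j u"
        unfolding Y_def by auto
      have yu: "y \<noteq> L u" using y(1) by auto
      have "x \<in> W n" using Xf_W[OF n3 R0 u j y(1-3)] y(4) by simp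
      moreover have "moran n x u v = w'"
        using moran_topins[OF uv, of n x] Q_Xf[OF y(2) yu r0u] y(4) w'top by simp
      moreover have "x (L u) = j" using y(4) by simp
      ultimately show "x \<in> {x \<in> W n. moran n x u v = w' \<and> x (L u) = j}" by simp
    qed
  qed
  moreover have "inj_on (\<lambda>y. Xf r0 y j u) Y"
  proof (rule inj_onI)
    fix y1 y2 assume y1: "y1 \<in> Y" and y2: "y2 \<in> Y" and eq: "Xf r0 y1 j u = Xf r0 y2 j u"
    have h1: "r0 y1 < j" "y1 \<noteq> L u" "r0 y2 < j" "y2 \<noteq> L u" using y1 y2 by (auto simp: Y_def)
    have "Xf r0 y2 j u (tr j y1) = j" using eq Xf_tr[OF h1(2)] by metis
    then have "tr j y1 = L u \<or> tr j y1 = tr j y2" using Xf_vals[of r0 y2 j u "tr j y1", OF h1(3,4)] by blast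
    then show "y1 = y2" using h1(2) by (metis tr_eq_L tr_inj)
  qed
  ultimately show ?thesis using card_Y[OF R0 n3 j] by (simp add: card_image Y_def)
qed

definition w0 :: rtree where "w0 = (\<lambda>z. if z = L 1 \<or> z = L 2 then 1 else 0)"

lemma nodes2: "nodes 2 = {L 1, L 2, I 1}"
  by (auto simp: nodes_def)

lemma W2_eq: "W 2 = {w0}"
proof
  show "W 2 \<subseteq> {w0}"
  proof
    fix x assume x: "x \<in> W 2"
    have "x z = w0 z" for z
    proof (cases "z = L 1 \<or> z = L 2")
      case True then show ?thesis using W_1[OF x, of 1] W_1[OF x, of 2] by (auto simp: w0_def)
    next
      case False
      then have "z \<notin> nodes 2 - {I 1}" by (auto simp: nodes2)
      then show ?thesis using W_4[OF x] False by (simp add: w0_def)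
    qed
    then show "x \<in> {w0}" by auto
  qed
  have "{z \<in> nodes 2. w0 z = 1} = {L 1, L 2}" by (auto simp: nodes2 w0_def)
  then have "card {z \<in> nodes 2. w0 z = 1} = 2" by simp
  then show "{w0} \<subseteq> W 2"
    by (auto simp: W_def w0_def nodes2)
qed

lemma moran2: "u \<in> {1..2} \<Longrightarrow> v \<in> {1..2} \<Longrightarrow> u \<noteq> v \<Longrightarrow> moran 2 w0 u v = w0"
  unfolding moran_def w0_def Let_def
  by (rule ext) (auto split: node.split)

lemma moran_W:
  assumes "n \<ge> 2" "x \<in> W n" "u \<in> {1..n}" "v \<in> {1..n}" "u \<noteq> v"
  shows "moran n x u v \<in> W n"
proof (cases "n = 2")
  case True
  then show ?thesis using assms W2_eq moran2 by auto
next
  case False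
  then show ?thesis using moran_W3[OF _ assms(2-5)] assms(1) by auto
qed

lemma count_j:
  assumes n2: "n \<ge> 2" and w': "w' \<in> W n" and u: "u \<in> {1..n}" and v: "v \<in> {1..n}" and uv: "u \<noteq> v"
    and cu: "w' (L u) = n - 1" and cv: "w' (L v) = n - 1" and j: "1 \<le> j" "j \<le> n - 1"
  shows "card {x \<in> W n. moran n x u v = w' \<and> x (L u) = j} = j"
proof (cases "n = 2")
  case True
  then have "w' = w0" "j = 1" using w' W2_eq j by auto
  then have "{x \<in> W n. moran n x u v = w' \<and> x (L u) = j} = {w0}"
    using True W2_eq moran2[OF _ _ uv] u v by (auto simp: w0_def)
  then show ?thesis using \<open>j = 1\<close> by simp
next
  case False
  then show ?thesis using count_j3[OF _ assms(2-9)] n2 by auto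
qed

lemma finite_W: "finite (W n)"
proof -
  let ?F = "(\<lambda>f z. if z \<in> nodes n then f z else 0) :: (node \<Rightarrow> nat) \<Rightarrow> rtree"
  have "W n \<subseteq> ?F ` (PiE (nodes n) (\<lambda>_. {..n}))"
  proof
    fix x assume x: "x \<in> W n"
    have le: "x z \<le> n" for z
    proof (cases z)
      case (L i) then show ?thesis using W_1[OF x, of i] W_4[OF x, of z] by (cases "i \<in> {1..n}") auto
    next
      case (I k)
      show ?thesis
      proof (cases "k \<in> {2..n-1}")
        case True then show ?thesis using W_2[OF x, of k] I by auto
      next
        case False
        then have "z \<notin> nodes n - {I 1}" using I by auto
        then show ?thesis using W_4[OF x] by simp
      qed
    qed
    have "x = ?F (restrict x (nodes n))"
    proof
      fix z show "x z = ?F (restrict x (nodes n)) z" using W_4[OF x, of z] by (auto simp: restrict_def)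
    qed
    moreover have "restrict x (nodes n) \<in> PiE (nodes n) (\<lambda>_. {..n})" using le by auto
    ultimately show "x \<in> ?F ` (PiE (nodes n) (\<lambda>_. {..n}))" by blast
  qed
  moreover have "finite (PiE (nodes n) (\<lambda>_. {..n}))" by (intro finite_PiE) auto
  ultimately show ?thesis using finite_subset by blast
qed

lemma card_swap:
  "finite A \<Longrightarrow> finite C \<Longrightarrow> (\<Sum>x\<in>A. card {y \<in> C. R x y}) = (\<Sum>y\<in>C. card {x \<in> A. R x y})"
  using sum.swap_restrict[of A C "\<lambda>x y. 1::nat" R] by simp

lemma card_filter_sum: "finite A \<Longrightarrow> card {x \<in> A. P x} = (\<Sum>x\<in>A. if P x then 1 else 0)"
  by (simp add: sum.If_cases Int_def)

lemma finite_pairs[simp]: "finite (moran_pairs n)"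
proof -
  have "moran_pairs n \<subseteq> {1..n} \<times> {1..n}" by (auto simp: moran_pairs_def)
  then show ?thesis using finite_subset by blast
qed

lemma choose2_real: "real (n choose 2) = real (n * (n - 1)) / 2"
proof -
  have "even (n * (n - 1))" by (cases "even n") (auto simp: even_mult_iff)
  then have "2 * (n * (n - 1) div 2) = n * (n - 1)" by simp
  then have "real (2 * (n * (n - 1) div 2)) = real (n * (n - 1))" by (rule arg_cong)
  then have "2 * real (n * (n - 1) div 2) = real (n * (n - 1))" by (simp only: of_nat_mult of_nat_numeral)
  then show ?thesis unfolding choose_two by linarith
qed

lemma moran_Luv: "moran n x u v (L u) = n - 1" "moran n x u v (L v) = n - 1"
  by (simp_all add: moran_def Let_def)

lemma pair_set: "{(u, v). (u, v) \<in> A \<and> P u v} = {p \<in> A. P (fst p) (snd p)}"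
  by auto

theorem proposition2:
  fixes n j :: nat and w w' :: rtree
  assumes "n \<ge> 2" and "w \<in> W n" and "w' \<in> W n" and "1 \<le> j" and "j \<le> n - 1"
  shows "Mor n w w' = (\<Sum>i = 1..n-1. Mor_j n i w w') \<and>
         (\<Sum>x\<in>W n. Mor_j n j x w') = real j / real (n choose 2) \<and>
         (\<Sum>y\<in>W n. Mor_j n j w y) = real (B n j w) / real n"
proof (intro conjI)
  let ?P = "moran_pairs n"
  let ?D = "real (n * (n - 1))"
  have mp: "p \<in> ?P \<longleftrightarrow> fst p \<in> {1..n} \<and> snd p \<in> {1..n} \<and> fst p \<noteq> snd p" for p
    by (cases p) (auto simp: moran_pairs_def)
  have "(\<Sum>i = 1..n-1. card {p \<in> ?P. moran n w (fst p) (snd p) = w' \<and> w (L (fst p)) = i})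
      = (\<Sum>p\<in>?P. card {i \<in> {1..n-1}. moran n w (fst p) (snd p) = w' \<and> w (L (fst p)) = i})"
    by (rule card_swap) auto
  also have "\<dots> = (\<Sum>p\<in>?P. if moran n w (fst p) (snd p) = w' then 1 else 0)"
  proof (rule sum.cong)
    fix p assume p: "p \<in> ?P"
    then have "w (L (fst p)) \<in> {1..n-1}" using W_1[OF assms(2), of "fst p"] mp by auto
    then have "{i \<in> {1..n-1}. moran n w (fst p) (snd p) = w' \<and> w (L (fst p)) = i}
        = (if moran n w (fst p) (snd p) = w' then {w (L (fst p))} else {})" by auto
    then show "card {i \<in> {1..n-1}. moran n w (fst p) (snd p) = w' \<and> w (L (fst p)) = i}
        = (if moran n w (fst p) (snd p) = w' then 1 else 0)" by simp
  qed simp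
  also have "\<dots> = card {p \<in> ?P. moran n w (fst p) (snd p) = w'}"
    by (simp add: card_filter_sum)
  finally have c1: "card {p \<in> ?P. moran n w (fst p) (snd p) = w'} =
     (\<Sum>i = 1..n-1. card {p \<in> ?P. moran n w (fst p) (snd p) = w' \<and> w (L (fst p)) = i})" by simp
  show "Mor n w w' = (\<Sum>i = 1..n-1. Mor_j n i w w')"
    unfolding Mor_def Mor_j_def sum_divide_distrib[symmetric] pair_set
    using c1 by (simp only: of_nat_sum[symmetric])
  have "(\<Sum>x\<in>W n. card {p \<in> ?P. moran n x (fst p) (snd p) = w' \<and> x (L (fst p)) = j})
      = (\<Sum>p\<in>?P. card {x \<in> W n. moran n x (fst p) (snd p) = w' \<and> x (L (fst p)) = j})"
    by (rule card_swap) (auto simp: finite_W)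
  also have "\<dots> = (\<Sum>p\<in>?P. if w' (L (fst p)) = n - 1 \<and> w' (L (snd p)) = n - 1 then j else 0)"
  proof (rule sum.cong)
    fix p assume p: "p \<in> ?P"
    show "card {x \<in> W n. moran n x (fst p) (snd p) = w' \<and> x (L (fst p)) = j}
      = (if w' (L (fst p)) = n - 1 \<and> w' (L (snd p)) = n - 1 then j else 0)"
    proof (cases "w' (L (fst p)) = n - 1 \<and> w' (L (snd p)) = n - 1")
      case True
      then show ?thesis using count_j[OF assms(1,3), of "fst p" "snd p" j] p mp assms(4,5) by auto
    next
      case False
      have e: "{x \<in> W n. moran n x (fst p) (snd p) = w' \<and> x (L (fst p)) = j} = {}"
        using moran_Luv[of n _ "fst p" "snd p"] False by auto
      show ?thesis unfolding e using False by (simp only: card.empty if_False)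
    qed
  qed simp
  also have "\<dots> = j * card {p \<in> ?P. w' (L (fst p)) = n - 1 \<and> w' (L (snd p)) = n - 1}"
    by (simp add: card_filter_sum sum_distrib_left if_distrib[of "(*) j"] cong: if_cong)
  also have "card {p \<in> ?P. w' (L (fst p)) = n - 1 \<and> w' (L (snd p)) = n - 1} = 2"
  proof -
    define C where "C = {i \<in> {1..n}. w' (L i) = n - 1}"
    have "{z \<in> nodes n. w' z = n - 1} = L ` C"
    proof
      show "{z \<in> nodes n. w' z = n - 1} \<subseteq> L ` C"
      proof
        fix z assume z: "z \<in> {z \<in> nodes n. w' z = n - 1}"
        show "z \<in> L ` C"
        proof (cases z)
          case (L i) then show ?thesis using z by (auto simp: C_def)
        next
          case (I k)
          show ?thesis
          proof (cases "k = 1")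
            case True
            then have "w' z = 0" using W_4[OF assms(3), of z] I by auto
            then show ?thesis using z assms(1) by auto
          next
            case False
            then have "w' z < k" "k \<le> n - 1" using W_2[OF assms(3), of k] I z by auto
            then show ?thesis using z by auto
          qed
        qed
      qed
      show "L ` C \<subseteq> {z \<in> nodes n. w' z = n - 1}" by (auto simp: C_def)
    qed
    moreover have "card {z \<in> nodes n. w' z = n - 1} = 2" using W_3[OF assms(3), of "n - 1"] assms(1) by auto
    ultimately have "card C = 2" by (metis card_image inj_onI node.inject(1))
    then obtain c1 c2 where c: "C = {c1, c2}" "c1 \<noteq> c2" by (auto simp: card_2_iff)
    have "{p \<in> ?P. w' (L (fst p)) = n - 1 \<and> w' (L (snd p)) = n - 1} = {(c1, c2), (c2, c1)}"
    proof
      show "{p \<in> ?P. w' (L (fst p)) = n - 1 \<and> w' (L (snd p)) = n - 1} \<subseteq> {(c1, c2), (c2, c1)}"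
      proof
        fix p assume p: "p \<in> {p \<in> ?P. w' (L (fst p)) = n - 1 \<and> w' (L (snd p)) = n - 1}"
        then have "fst p \<in> C" "snd p \<in> C" "fst p \<noteq> snd p" using mp by (auto simp: C_def)
        then show "p \<in> {(c1, c2), (c2, c1)}" using c by (cases p) auto
      qed
      have "c1 \<in> C" "c2 \<in> C" using c by auto
      then show "{(c1, c2), (c2, c1)} \<subseteq> {p \<in> ?P. w' (L (fst p)) = n - 1 \<and> w' (L (snd p)) = n - 1}"
        using c(2) by (auto simp: C_def moran_pairs_def)
    qed
    then show ?thesis using c(2) by simp
  qed
  finally have c2: "(\<Sum>x\<in>W n. card {p \<in> ?P. moran n x (fst p) (snd p) = w' \<and> x (L (fst p)) = j}) = j * 2" .
  have Dpos: "?D > 0" using assms(1) by simp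
  show "(\<Sum>x\<in>W n. Mor_j n j x w') = real j / real (n choose 2)"
  proof -
    have "(\<Sum>x\<in>W n. Mor_j n j x w') = real (j * 2) / ?D"
      unfolding Mor_j_def sum_divide_distrib[symmetric] pair_set
      using c2 by (simp only: of_nat_sum[symmetric])
    also have "\<dots> = real j / real (n choose 2)" unfolding choose2_real using Dpos by (simp add: field_simps)
    finally show ?thesis .
  qed
  have "(\<Sum>y\<in>W n. card {p \<in> ?P. moran n w (fst p) (snd p) = y \<and> w (L (fst p)) = j})
      = (\<Sum>p\<in>?P. card {y \<in> W n. moran n w (fst p) (snd p) = y \<and> w (L (fst p)) = j})"
    by (rule card_swap) (auto simp: finite_W)
  also have "\<dots> = (\<Sum>p\<in>?P. if w (L (fst p)) = j then 1 else 0)"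
  proof (rule sum.cong)
    fix p assume p: "p \<in> ?P"
    have "moran n w (fst p) (snd p) \<in> W n" using moran_W[OF assms(1,2)] p mp by auto
    then have "{y \<in> W n. moran n w (fst p) (snd p) = y \<and> w (L (fst p)) = j}
       = (if w (L (fst p)) = j then {moran n w (fst p) (snd p)} else {})" by auto
    then show "card {y \<in> W n. moran n w (fst p) (snd p) = y \<and> w (L (fst p)) = j}
       = (if w (L (fst p)) = j then 1 else 0)" by simp
  qed simp
  also have "\<dots> = card {p \<in> ?P. w (L (fst p)) = j}" by (simp add: card_filter_sum)
  also have "\<dots> = B n j w * (n - 1)"
  proof -
    define A where "A = {i \<in> {1..n}. w (L i) = j}"
    have "{p \<in> ?P. w (L (fst p)) = j} = Sigma A (\<lambda>u. {1..n} - {u})"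
      by (auto simp: A_def moran_pairs_def)
    moreover have "card (Sigma A (\<lambda>u. {1..n} - {u})) = (\<Sum>u\<in>A. card ({1..n} - {u}))"
      by (rule card_SigmaI) (auto simp: A_def)
    moreover have "(\<Sum>u\<in>A. card ({1..n} - {u})) = card A * (n - 1)"
      by (simp add: A_def)
    ultimately show ?thesis by (simp add: B_def A_def)
  qed
  finally have c3: "(\<Sum>y\<in>W n. card {p \<in> ?P. moran n w (fst p) (snd p) = y \<and> w (L (fst p)) = j})
      = B n j w * (n - 1)" .
  show "(\<Sum>y\<in>W n. Mor_j n j w y) = real (B n j w) / real n"
  proof -
    have "(\<Sum>y\<in>W n. Mor_j n j w y) = real (B n j w * (n - 1)) / ?D"
      unfolding Mor_j_def sum_divide_distrib[symmetric] pair_set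
      using c3 by (simp only: of_nat_sum[symmetric])
    also have "\<dots> = real (B n j w) / real n" using assms(1) by (simp add: field_simps)
    finally show ?thesis .
  qed
qed

end
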